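(* Let $G=(V,E)$ be a connected finite multigraph without loops with $|V|\ge 2$, and let $f$ be an admissible function. Then there exists a cut $[S,\bar S]$ of $G$ such that $d^f_G(S,\bar S)=d^f(G)$ and such that both induced subgraphs $G[S]$ and $G[\bar S]$ are connected.
   Context: An admissible function is a function $f:[0,1]\to[0,\infty)$ that is concave and increasing on $[0,\tfrac12]$ and satisfies $f(x)=f(1-x)$ for all $x\in[0,1]$. For a graph $G=(V,E)$ and a nonempty proper subset $S\subset V$ with complement $\bar S=V\setminus S$, the cut $[S,\bar S]$ is the set of edges with one endpoint in $S$ and the other in $\bar S$; its balance is $b(S,\bar S)=\min(|S|,|\bar S|)/|V|$. Define $d^f_G(S,\bar S)=|[S,\bar S]|/f(b(S,\bar S))$ (interpreted as $+\infty$ if the denominator is $0$), and $d^f(G)=\min d^f_G(S,\bar S)$ over all cuts of $G$. $G[A]$ denotes the subgraph induced on $A\subseteq V$. *)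

theory Defs
  imports "HOL-Analysis.Analysis" "HOL-Library.Extended_Real"
begin

text \<open>A finite loopless multigraph on vertex set V, given by an edge-multiplicity
function mu: mu u v is the number of edges between u and v.\<close>
definition multigraph :: "'a set \<Rightarrow> ('a \<Rightarrow> 'a \<Rightarrow> nat) \<Rightarrow> bool" where
  "multigraph V mu \<longleftrightarrow> finite V \<and> (\<forall>u v. mu u v = mu v u)
     \<and> (\<forall>v. mu v v = 0) \<and> (\<forall>u v. mu u v > 0 \<longrightarrow> u \<in> V \<and> v \<in> V)"

definition induced_connected :: "('a \<Rightarrow> 'a \<Rightarrow> nat) \<Rightarrow> 'a set \<Rightarrow> bool" where
  "induced_connected mu A \<longleftrightarrow>
     (\<forall>u\<in>A. \<forall>v\<in>A. (u, v) \<in> ({(x, y). x \<in> A \<and> y \<in> A \<and> mu x y > 0})\<^sup>*)"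

definition admissible :: "(real \<Rightarrow> real) \<Rightarrow> bool" where
  "admissible f \<longleftrightarrow> (\<forall>x\<in>{0..1}. f x \<ge> 0)
     \<and> concave_on {0..1/2} f \<and> mono_on {0..1/2} f
     \<and> (\<forall>x\<in>{0..1}. f x = f (1 - x))"

definition cut_size :: "'a set \<Rightarrow> ('a \<Rightarrow> 'a \<Rightarrow> nat) \<Rightarrow> 'a set \<Rightarrow> nat" where
  "cut_size V mu S = (\<Sum>u\<in>S. \<Sum>v\<in>V - S. mu u v)"

definition balance :: "'a set \<Rightarrow> 'a set \<Rightarrow> real" where
  "balance V S = real (min (card S) (card (V - S))) / real (card V)"

definition is_cut :: "'a set \<Rightarrow> 'a set \<Rightarrow> bool" where
  "is_cut V S \<longleftrightarrow> S \<subseteq> V \<and> S \<noteq> {} \<and> S \<noteq> V"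

definition dcut :: "(real \<Rightarrow> real) \<Rightarrow> 'a set \<Rightarrow> ('a \<Rightarrow> 'a \<Rightarrow> nat) \<Rightarrow> 'a set \<Rightarrow> ereal" where
  "dcut f V mu S = (if f (balance V S) = 0 then \<infinity>
      else ereal (real (cut_size V mu S) / f (balance V S)))"

definition dgraph :: "(real \<Rightarrow> real) \<Rightarrow> 'a set \<Rightarrow> ('a \<Rightarrow> 'a \<Rightarrow> nat) \<Rightarrow> ereal" where
  "dgraph f V mu = Min (dcut f V mu ` {S. is_cut V S})"

end

theory Submission imports Defs begin

lemma ratio1:
  assumes adm: "admissible f" and x: "0 < x" "x \<le> y" "y \<le> 1/2"
  shows "x * f y \<le> y * f x"
proof -
  have c: "concave_on {0..1/2} f" and nn: "\<forall>x\<in>{0..1}. f x \<ge> 0" using adm unfolding admissible_def by blast+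
  define t where "t = x / y"
  have y0: "y > 0" using x by linarith
  have t: "0 \<le> t" "t \<le> 1" using x y0 by (auto simp: t_def divide_simps)
  have e: "(1 - t) *\<^sub>R (0::real) + t *\<^sub>R y = x" using y0 by (simp add: t_def)
  have m0: "(0::real) \<in> {0..1/2}" "y \<in> {0..1/2}" using x y0 by auto
  have h: "(1 - t) * f 0 + t * f y \<le> f x" using concave_onD[OF c t(1) t(2) m0] unfolding e .
  have f0: "f 0 \<ge> 0" using nn by auto
  have "(1 - t) * f 0 \<ge> 0" using f0 t(2) by simp
  hence h2: "t * f y \<le> f x" using h by linarith
  have "y * (t * f y) \<le> y * f x" using h2 y0 by (simp add: mult_left_mono)
  moreover have "y * (t * f y) = x * f y" using y0 by (simp add: t_def)
  ultimately show ?thesis by simp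
qed

lemma ratio:
  assumes adm: "admissible f" and x: "0 < x" "x \<le> y" "y \<le> 1"
  shows "x * f y \<le> y * f x"
proof -
  have nn: "\<forall>x\<in>{0..1}. f x \<ge> 0" and mo: "mono_on {0..1/2} f"
    and sy: "\<forall>x\<in>{0..1}. f x = f (1 - x)" using adm unfolding admissible_def by blast+
  show ?thesis
  proof (cases "y \<le> 1/2")
    case True thus ?thesis using ratio1[OF adm x(1,2)] by auto
  next
    case yb: False
    have fy: "f y = f (1 - y)" by (rule bspec[OF sy]) (use x in auto)
    show ?thesis
    proof (cases "x \<le> 1/2")
      case True
      have "f (1 - y) \<le> f (1/2)" using mo yb x by (intro mono_onD[OF mo]) auto
      hence "x * f y \<le> x * f (1/2)" using fy x by (intro mult_left_mono) auto
      also have "\<dots> \<le> (1/2) * f x" using ratio1[OF adm x(1), of "1/2"] True by auto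
      also have "\<dots> \<le> y * f x" using nn x True yb by (intro mult_right_mono) auto
      finally show ?thesis .
    next
      case False
      have fx: "f x = f (1 - x)" by (rule bspec[OF sy]) (use x False in auto)
      have "f (1 - y) \<le> f (1 - x)" using x False by (intro mono_onD[OF mo]) auto
      hence "x * f y \<le> x * f x" using fy fx x by (intro mult_left_mono) auto
      also have "\<dots> \<le> y * f x" using nn x by (intro mult_right_mono) auto
      finally show ?thesis .
    qed
  qed
qed

lemma subadd:
  assumes adm: "admissible f" and ab: "0 < a" "0 < b" "a + b \<le> 1"
  shows "f (a + b) \<le> f a + f b"
proof -
  have 1: "a * f (a+b) \<le> (a+b) * f a" using ratio[OF adm ab(1), of "a+b"] ab by auto
  have 2: "b * f (a+b) \<le> (a+b) * f b" using ratio[OF adm ab(2), of "a+b"] ab by auto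
  have "(a+b) * f (a+b) \<le> (a+b) * (f a + f b)" using 1 2 by (simp add: algebra_simps)
  thus ?thesis using ab by simp
qed

lemma dcut_choice:
  fixes cA cB fA fB fS :: real
  assumes "cA \<ge> 0" "cB \<ge> 0" "fA \<ge> 0" "fB \<ge> 0" "fS \<ge> 0" "fS \<le> fA + fB"
  shows "(if fA = 0 then \<infinity> else ereal (cA / fA)) \<le> (if fS = 0 then \<infinity> else ereal ((cA+cB) / fS))
       \<or> (if fB = 0 then \<infinity> else ereal (cB / fB)) \<le> (if fS = 0 then \<infinity> else ereal ((cA+cB) / fS))"
proof (cases "fS = 0")
  case True thus ?thesis by simp
next
  case fS0: False
  hence fS: "fS > 0" using assms by auto
  define r where "r = (cA + cB) / fS"
  have r: "r * fS = cA + cB" using fS by (simp add: r_def)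
  have r0: "r \<ge> 0" using assms fS by (simp add: r_def)
  show ?thesis
  proof (rule ccontr)
    assume n: "\<not> ?thesis"
    have hA: "cA \<ge> r * fA \<and> (fA > 0 \<longrightarrow> cA > r * fA)"
    proof (cases "fA = 0")
      case True thus ?thesis using assms by simp
    next
      case False
      hence "cA / fA > r" using n False fS0 by (auto simp: r_def)
      thus ?thesis using False assms by (auto simp: field_simps)
    qed
    have hB: "cB \<ge> r * fB \<and> (fB > 0 \<longrightarrow> cB > r * fB)"
    proof (cases "fB = 0")
      case True thus ?thesis using assms by simp
    next
      case False
      hence "cB / fB > r" using n False fS0 by (auto simp: r_def)
      thus ?thesis using False assms by (auto simp: field_simps)
    qed
    have "fA > 0 \<or> fB > 0" using assms fS by auto
    hence "cA + cB > r * (fA + fB)" using hA hB by (auto simp: algebra_simps)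
    moreover have "r * (fA + fB) \<ge> r * fS" using r0 assms by (intro mult_left_mono) auto
    ultimately show False using r by simp
  qed
qed

definition ER :: "('a \<Rightarrow> 'a \<Rightarrow> nat) \<Rightarrow> 'a set \<Rightarrow> ('a \<times> 'a) set" where
  "ER mu X = {(x, y). x \<in> X \<and> y \<in> X \<and> mu x y > 0}"

lemma ic_ER: "induced_connected mu A \<longleftrightarrow> (\<forall>u\<in>A. \<forall>v\<in>A. (u, v) \<in> (ER mu A)\<^sup>*)"
  by (simp add: induced_connected_def ER_def)

lemma ER_sym:
  assumes "\<forall>u v. mu u v = mu v u" "(x, y) \<in> (ER mu X)\<^sup>*"
  shows "(y, x) \<in> (ER mu X)\<^sup>*"
  using assms(2)
proof (induction rule: rtrancl_induct)
  case base thus ?case by simp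
next
  case (step y z)
  hence "(z, y) \<in> ER mu X" using assms(1) by (auto simp: ER_def)
  thus ?case using step by (meson converse_rtrancl_into_rtrancl)
qed

lemma ER_mono: "X \<subseteq> Y \<Longrightarrow> (ER mu X)\<^sup>* \<subseteq> (ER mu Y)\<^sup>*"
  by (rule rtrancl_mono) (auto simp: ER_def)

lemma fbal:
  assumes "finite V" "X \<subseteq> V" "admissible f" "card V > 0"
  shows "f (balance V X) = f (real (card X) / real (card V))"
proof -
  have sy: "\<forall>x\<in>{0..1}. f x = f (1 - x)" using assms(3) unfolding admissible_def by blast
  have cX: "card X \<le> card V" using assms by (simp add: card_mono)
  have cV: "card (V - X) = card V - card X" using assms by (simp add: card_Diff_subset finite_subset)
  show ?thesis
  proof (cases "card X \<le> card V - card X")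
    case True thus ?thesis by (simp add: balance_def cV)
  next
    case False
    hence "balance V X = 1 - real (card X) / real (card V)"
      using cX assms(4) by (simp add: balance_def cV of_nat_diff field_simps)
    moreover have "real (card X) / real (card V) \<in> {0..1}" using cX assms(4) by auto
    hence "f (real (card X) / real (card V)) = f (1 - real (card X) / real (card V))"
      by (rule bspec[OF sy])
    ultimately show ?thesis by simp
  qed
qed

lemma cut_split:
  assumes mg: "multigraph V mu" and "S \<subseteq> V" "A \<inter> B = {}" "S = A \<union> B"
    and no: "\<forall>x\<in>A. \<forall>y\<in>B. mu x y = 0"
  shows "cut_size V mu S = cut_size V mu A + cut_size V mu B"
proof -
  have fin: "finite V" using mg by (simp add: multigraph_def)
  have sym: "\<forall>u v. mu u v = mu v u" using mg by (simp add: multigraph_def)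
  have fA: "finite A" "finite B" using assms fin by (auto intro: finite_subset)
  have VA: "V - A = (V - S) \<union> B" "(V - S) \<inter> B = {}" "V - B = (V - S) \<union> A" "(V - S) \<inter> A = {}"
    using assms by auto
  have eA: "(\<Sum>v\<in>V - A. mu u v) = (\<Sum>v\<in>V - S. mu u v)" if "u \<in> A" for u
  proof -
    have "(\<Sum>v\<in>V - A. mu u v) = (\<Sum>v\<in>(V - S) \<union> B. mu u v)" by (simp only: VA(1))
    also have "\<dots> = (\<Sum>v\<in>V - S. mu u v) + (\<Sum>v\<in>B. mu u v)"
      by (rule sum.union_disjoint) (use fin fA VA(2) in auto)
    also have "(\<Sum>v\<in>B. mu u v) = 0" using no that by simp
    finally show ?thesis by simp
  qed
  have eB: "(\<Sum>v\<in>V - B. mu u v) = (\<Sum>v\<in>V - S. mu u v)" if "u \<in> B" for u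
  proof -
    have "(\<Sum>v\<in>V - B. mu u v) = (\<Sum>v\<in>(V - S) \<union> A. mu u v)" by (simp only: VA(3))
    also have "\<dots> = (\<Sum>v\<in>V - S. mu u v) + (\<Sum>v\<in>A. mu u v)"
      by (rule sum.union_disjoint) (use fin fA VA(4) in auto)
    also have "(\<Sum>v\<in>A. mu u v) = 0" using no that sym by (metis (no_types, lifting) sum.neutral)
    finally show ?thesis by simp
  qed
  have "cut_size V mu A = (\<Sum>u\<in>A. \<Sum>v\<in>V - S. mu u v)"
    unfolding cut_size_def using eA by (rule sum.cong[OF refl])
  moreover have "cut_size V mu B = (\<Sum>u\<in>B. \<Sum>v\<in>V - S. mu u v)"
    unfolding cut_size_def using eB by (rule sum.cong[OF refl])
  ultimately show ?thesis unfolding cut_size_def using assms fA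
    by (simp add: sum.union_disjoint)
qed

lemma cut_compl:
  assumes mg: "multigraph V mu" and "C \<subseteq> V"
  shows "dcut f V mu (V - C) = dcut f V mu C"
proof -
  have sym: "\<forall>u v. mu u v = mu v u" using mg by (simp add: multigraph_def)
  have VV: "V - (V - C) = C" using assms by auto
  have "cut_size V mu (V - C) = cut_size V mu C"
    unfolding cut_size_def VV using sym by (subst sum.swap) simp
  moreover have "balance V (V - C) = balance V C" unfolding balance_def VV by (simp add: min.commute)
  ultimately show ?thesis by (simp add: dcut_def)
qed

lemma comp:
  assumes mg: "multigraph V mu" and adm: "admissible f"
  shows "is_cut V S \<Longrightarrow> \<exists>C. C \<subseteq> S \<and> C \<noteq> {} \<and> induced_connected mu C
     \<and> (\<forall>x\<in>C. \<forall>y\<in>S - C. mu x y = 0) \<and> dcut f V mu C \<le> dcut f V mu S"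
proof (induction "card S" arbitrary: S rule: less_induct)
  case less
  have fin: "finite V" using mg by (simp add: multigraph_def)
  have sym: "\<forall>u v. mu u v = mu v u" using mg by (simp add: multigraph_def)
  have SV: "S \<subseteq> V" "S \<noteq> {}" "S \<noteq> V" using less.prems by (auto simp: is_cut_def)
  show ?case
  proof (cases "induced_connected mu S")
    case True thus ?thesis using SV by auto
  next
    case False
    then obtain u v where uv: "u \<in> S" "v \<in> S" "(u, v) \<notin> (ER mu S)\<^sup>*" by (auto simp: ic_ER)
    define A where "A = {y \<in> S. (u, y) \<in> (ER mu S)\<^sup>*}"
    define B where "B = S - A"
    have uA: "u \<in> A" using uv by (simp add: A_def)
    have vB: "v \<in> B" using uv by (simp add: A_def B_def)
    have noAB: "\<forall>x\<in>A. \<forall>y\<in>B. mu x y = 0"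
    proof (intro ballI)
      fix x y assume "x \<in> A" "y \<in> B"
      show "mu x y = 0"
      proof (rule ccontr)
        assume "mu x y \<noteq> 0"
        hence "(x, y) \<in> ER mu S" using \<open>x \<in> A\<close> \<open>y \<in> B\<close> by (auto simp: ER_def A_def B_def)
        hence "(u, y) \<in> (ER mu S)\<^sup>*" using \<open>x \<in> A\<close> by (auto simp: A_def intro: rtrancl_into_rtrancl)
        thus False using \<open>y \<in> B\<close> by (auto simp: A_def B_def)
      qed
    qed
    have inA: "(u, y) \<in> (ER mu A)\<^sup>*" if "(u, y) \<in> (ER mu S)\<^sup>*" for y
      using that
    proof (induction rule: rtrancl_induct)
      case base thus ?case by simp
    next
      case (step y z)
      hence "y \<in> A" "z \<in> A" using step by (auto simp: A_def ER_def intro: rtrancl_into_rtrancl)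
      hence "(y, z) \<in> ER mu A" using step by (auto simp: ER_def)
      thus ?case using step by (meson rtrancl_into_rtrancl)
    qed
    have Aconn: "induced_connected mu A"
      unfolding ic_ER
    proof (intro ballI)
      fix y1 y2 assume "y1 \<in> A" "y2 \<in> A"
      hence "(u, y1) \<in> (ER mu A)\<^sup>*" "(u, y2) \<in> (ER mu A)\<^sup>*" using inA by (auto simp: A_def)
      thus "(y1, y2) \<in> (ER mu A)\<^sup>*" using ER_sym[OF sym] by (meson rtrancl_trans)
    qed
    have cutA: "is_cut V A" using SV uA by (auto simp: is_cut_def A_def)
    have cutB: "is_cut V B" using SV vB by (auto simp: is_cut_def B_def)
    have SAB: "S = A \<union> B" "A \<inter> B = {}" by (auto simp: B_def A_def)
    have cs: "cut_size V mu S = cut_size V mu A + cut_size V mu B"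
      by (rule cut_split[OF mg SV(1) SAB(2) SAB(1) noAB])
    have V0: "card V > 0" using SV fin by (auto simp: card_gt_0_iff)
    have fA: "finite A" "finite B" using SV fin SAB by (auto intro: finite_subset)
    have cardS: "card S = card A + card B" using SAB fA by (simp add: card_Un_disjoint)
    have cSV: "card S \<le> card V" using SV fin by (simp add: card_mono)
    have bal: "f (balance V X) = f (real (card X) / real (card V))" if "X \<subseteq> V" for X
      using fbal[OF fin that adm V0] .
    have nnb: "f (balance V X) \<ge> 0" if "X \<subseteq> V" for X
    proof -
      have "real (card X) / real (card V) \<in> {0..1}" using that fin V0 by (auto simp: card_mono)
      moreover have "\<forall>x\<in>{0..1}. f x \<ge> 0" using adm unfolding admissible_def by blast
      ultimately show ?thesis using bal[OF that] by auto
    qed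
    have AS: "A \<subseteq> V" "B \<subseteq> V" using SV SAB by auto
    have sub: "f (balance V S) \<le> f (balance V A) + f (balance V B)"
    proof -
      have "card A > 0" "card B > 0" using uA vB fA by (auto simp: card_gt_0_iff)
      hence "f (real (card A) / real (card V) + real (card B) / real (card V))
          \<le> f (real (card A) / real (card V)) + f (real (card B) / real (card V))"
        using V0 cSV cardS by (intro subadd[OF adm]) (auto simp: divide_simps)
      thus ?thesis using bal SV AS cardS by (simp add: add_divide_distrib)
    qed
    have ch: "dcut f V mu A \<le> dcut f V mu S \<or> dcut f V mu B \<le> dcut f V mu S"
    proof -
      have e: "dcut f V mu S = (if f (balance V S) = 0 then \<infinity> else
          ereal ((real (cut_size V mu A) + real (cut_size V mu B)) / f (balance V S)))"
        by (simp add: dcut_def cs)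
      show ?thesis unfolding e unfolding dcut_def
        by (rule dcut_choice) (use nnb[OF AS(1)] nnb[OF AS(2)] nnb[OF SV(1)] sub in auto)
    qed
    show ?thesis
    proof (cases "dcut f V mu A \<le> dcut f V mu S")
      case True
      thus ?thesis using uA Aconn noAB SAB by (intro exI[of _ A]) auto
    next
      case False
      hence dB: "dcut f V mu B \<le> dcut f V mu S" using ch by auto
      have "card B < card S" using fA cardS uA by (auto simp: card_gt_0_iff)
      from less.hyps[OF this cutB] obtain C where C: "C \<subseteq> B" "C \<noteq> {}" "induced_connected mu C"
        "\<forall>x\<in>C. \<forall>y\<in>B - C. mu x y = 0" "dcut f V mu C \<le> dcut f V mu B" by blast
      have "\<forall>x\<in>C. \<forall>y\<in>S - C. mu x y = 0"
      proof (intro ballI)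
        fix x y assume "x \<in> C" "y \<in> S - C"
        show "mu x y = 0"
        proof (cases "y \<in> A")
          case True
          have "x \<in> B" using C(1) \<open>x \<in> C\<close> by auto
          hence "mu y x = 0" using noAB True by blast
          thus ?thesis using sym by metis
        next
          case False thus ?thesis using C(4) \<open>x \<in> C\<close> \<open>y \<in> S - C\<close> SAB by auto
        qed
      qed
      thus ?thesis using C dB SAB by (intro exI[of _ C]) (auto intro: order_trans)
    qed
  qed
qed
theorem proposition2:
  fixes V :: "'a set" and mu :: "'a \<Rightarrow> 'a \<Rightarrow> nat" and f :: "real \<Rightarrow> real"
  assumes "multigraph V mu"
    and "induced_connected mu V"
    and "card V \<ge> 2"
    and "admissible f"
  shows "\<exists>S. is_cut V S \<and> dcut f V mu S = dgraph f V mu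
           \<and> induced_connected mu S \<and> induced_connected mu (V - S)"
proof -
  note mg = assms(1) and adm = assms(4)
  have fin: "finite V" using mg by (simp add: multigraph_def)
  have sym: "\<forall>u v. mu u v = mu v u" using mg by (simp add: multigraph_def)
  have mgV: "\<forall>u v. mu u v > 0 \<longrightarrow> u \<in> V \<and> v \<in> V" using mg unfolding multigraph_def by blast
  let ?K = "{S. is_cut V S}"
  have "?K \<subseteq> Pow V" by (auto simp: is_cut_def)
  hence finK: "finite ?K" using fin by (meson finite_Pow_iff finite_subset)
  have "V \<noteq> {}" using assms(3) by auto
  then obtain a where a: "a \<in> V" by auto
  have "card (V - {a}) = card V - 1" using fin a by simp
  hence "card (V - {a}) \<noteq> 0" using assms(3) by linarith
  hence "V - {a} \<noteq> {}" by (metis card.empty)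
  then obtain b where b: "b \<in> V - {a}" by auto
  have ab: "a \<in> V" "b \<in> V" "a \<noteq> b" using a b by auto
  have "is_cut V {a}" using ab by (auto simp: is_cut_def)
  hence neK: "?K \<noteq> {}" by auto
  have "dgraph f V mu \<in> dcut f V mu ` ?K" unfolding dgraph_def using finK neK by (intro Min_in) auto
  then obtain S0 where S0: "is_cut V S0" "dcut f V mu S0 = dgraph f V mu" by auto
  have minle: "dgraph f V mu \<le> dcut f V mu X" if "is_cut V X" for X
    unfolding dgraph_def using finK that by (intro Min_le) auto
  obtain C where C: "C \<subseteq> S0" "C \<noteq> {}" "induced_connected mu C" "dcut f V mu C \<le> dcut f V mu S0"
    using comp[OF mg adm S0(1)] by blast
  have CV: "C \<subseteq> V" using C S0 by (auto simp: is_cut_def)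
  have cutT: "is_cut V (V - C)" using C S0 by (auto simp: is_cut_def)
  obtain D where D: "D \<subseteq> V - C" "D \<noteq> {}" "induced_connected mu D"
      "\<forall>x\<in>D. \<forall>y\<in>(V - C) - D. mu x y = 0" "dcut f V mu D \<le> dcut f V mu (V - C)"
    using comp[OF mg adm cutT] by blast
  have cutD: "is_cut V D" using D C CV by (auto simp: is_cut_def)
  have dD: "dcut f V mu D = dgraph f V mu"
    using D(5) cut_compl[OF mg CV, of f] C(4) S0(2) minle[OF cutD] by auto
  obtain c0 where c0: "c0 \<in> C" using C by auto
  have reach: "\<exists>c\<in>C. (y, c) \<in> (ER mu (V - D))\<^sup>*" if "y \<in> V - D" for y
  proof -
    have "(y, c0) \<in> (ER mu V)\<^sup>*" using assms(2) that c0 CV by (auto simp: ic_ER)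
    thus ?thesis using that
    proof (induction rule: converse_rtrancl_induct)
      case base thus ?case using c0 by blast
    next
      case (step y y')
      show ?case
      proof (cases "y \<in> C")
        case True thus ?thesis by blast
      next
        case False
        have yy: "y \<in> V" "y' \<in> V" "mu y y' > 0" using step(1) by (auto simp: ER_def)
        have "y' \<notin> D"
        proof
          assume "y' \<in> D"
          hence "mu y' y = 0" using D(4) step(4) False yy by auto
          thus False using sym yy by (metis less_irrefl)
        qed
        hence "y' \<in> V - D" using yy by auto
        then obtain c where "c \<in> C" "(y', c) \<in> (ER mu (V - D))\<^sup>*" using step(3) by blast
        moreover have "(y, y') \<in> ER mu (V - D)" using yy step(4) \<open>y' \<in> V - D\<close> by (auto simp: ER_def)
        ultimately show ?thesis by (meson converse_rtrancl_into_rtrancl)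
      qed
    qed
  qed
  have "induced_connected mu (V - D)"
    unfolding ic_ER
  proof (intro ballI)
    fix u v assume uv: "u \<in> V - D" "v \<in> V - D"
    obtain c1 where c1: "c1 \<in> C" "(u, c1) \<in> (ER mu (V - D))\<^sup>*" using reach uv by blast
    obtain c2 where c2: "c2 \<in> C" "(v, c2) \<in> (ER mu (V - D))\<^sup>*" using reach uv by blast
    have "C \<subseteq> V - D" using D CV by auto
    moreover have "(c1, c2) \<in> (ER mu C)\<^sup>*" using C(3) c1 c2 by (auto simp: ic_ER)
    ultimately have "(c1, c2) \<in> (ER mu (V - D))\<^sup>*" using ER_mono by blast
    moreover have "(c2, v) \<in> (ER mu (V - D))\<^sup>*" using ER_sym[OF sym c2(2)] .
    ultimately show "(u, v) \<in> (ER mu (V - D))\<^sup>*" using c1 by (meson rtrancl_trans)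
  qed
  thus ?thesis using cutD dD D(3) by blast
qed

end
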